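(* The hyperplane $S_\gamma^\perp$ of $\Sigma$ meets $\Pi$ in a solid $\Pi\cap S_\gamma^\perp$ such that $\Pi\cap S_\gamma^\perp\cap\mathcal Q$ is an elliptic quadric of that solid. Moreover the stabilizer of $S_\gamma$ in $G$ has order $q^2+1$, and $|S_\gamma^G|=q^2(q^2-1)$.
   Context: Let $q$ be an even prime power and $\mathrm{PG}(5,q^2)$ have homogeneous coordinates $(X_1,\dots,X_6)$, points written as column vectors. Let $\Sigma$ be the set of points having a coordinate vector $(\alpha,\alpha^q,\delta_0,\beta,\beta^q,\delta_1)$ with $\alpha,\beta\in\mathbb F_{q^2}$, $\delta_0,\delta_1\in\mathbb F_q$ (a Baer subgeometry $\cong\mathrm{PG}(5,q)$). Let $\Pi=\Sigma\cap\{X_6=0\}$ (a hyperplane of $\Sigma$), $\mathcal Q=\Sigma\cap\{X_6=0,\ X_3^2+X_1X_5+X_2X_4=0\}=\{(\alpha,\alpha^q,\sqrt{\alpha\beta^q+\alpha^q\beta},\beta,\beta^q,0)\}$ (a parabolic quadric $\mathcal Q(4,q)$ of $\Pi$) with nucleus $N=(0,0,1,0,0,0)$. Fix $\omega\in\mathbb F_{q^2}\setminus\mathbb F_q$ with $\omega+\omega^q=1$ and let $h(X,Y)=\omega X_1Y_4^q+\omega^qX_1Y_6^q+\omega^qX_2Y_5^q+\omega X_2Y_6^q+X_3Y_6^q+\omega^qX_4Y_1^q+\omega X_5Y_2^q+\omega X_6Y_1^q+\omega^qX_6Y_2^q+X_6Y_3^q$ (Hermitian form of a Hermitian variety $\mathcal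 H(5,q^2)$ containing $\Sigma$). Restricted to $\Sigma$, $P\perp R\iff h(P,R)=0$ defines a symplectic polarity $\perp$ of $\Sigma$; $\mathcal W(5,q)$ is the associated symplectic polar space (so $N^\perp=\Pi$). For $a,b,c,d\in\mathbb F_{q^2}$ with $ad+bc=1$ let $M_{a,b,c,d}$ be the $6\times6$ matrix with rows $(a^2,0,0,0,c^2,\tfrac{c(a+c\omega^q)}{\omega})$, $(0,a^{2q},0,c^{2q},0,\tfrac{c^q(a^q+c^q\omega)}{\omega^q})$, $(ab,a^qb^q,1,c^qd^q,cd,\tfrac{d(a+c\omega^q)}{\omega}+\tfrac{d^q(a^q+c^q\omega)}{\omega^q}+\tfrac{1}{\omega^{q+1}})$, $(0,b^{2q},0,d^{2q},0,\tfrac{d^q(b^q+d^q\omega)+\omega}{\omega^q})$, $(b^2,0,0,0,d^2,\tfrac{d(b+d\omega^q)+\omega^q}{\omega})$, $(0,0,0,0,0,1)$, and let $G\cong\mathrm{PSL}(2,q^2)$ be the group of projectivities $X\mapsto M_{a,b,c,d}X$; $G$ stabilizes $\Sigma,\Pi,\mathcal Q,N$ and the polarity $\perp$. Fix $\gamma\in\mathbb F_{q^2}$ with $X^2+X+\gamma$ irreducible over $\mathbb F_{q^2}$ and let $S_\gamma=\left(\frac{\gamma}{\omega},\frac{\gamma^q}{\omega^q},\frac{\omega^q\gamma}{\omega}+\frac{\omega\gamma^q}{\omega^q},1,1,1\right)\in\Sigma$; $S_\gamma^G$ is its $G$-orbit. *)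

theory Defs
  imports "HOL-Computational_Algebra.Computational_Algebra"
begin

text \<open>Vectors of PG(5,q^2) are lists of length 6 over a finite field 'a with q^2 elements;
  coordinate X_i is the list entry of index i-1. A projective point is the set of all
  nonzero scalar multiples of a nonzero vector.\<close>

definition subF :: "nat \<Rightarrow> ('a::field) set" where
  "subF q = {x. x ^ q = x}"

definition ptof :: "('a::field) list \<Rightarrow> 'a list set" where
  "ptof v = {map (\<lambda>x. c * x) v | c. c \<noteq> 0}"

definition PG5 :: "('a::field) list set set" where
  "PG5 = {ptof v | v. length v = 6 \<and> v \<noteq> replicate 6 0}"

definition sigvec :: "nat \<Rightarrow> ('a::field) list \<Rightarrow> bool" where
  "sigvec q v \<longleftrightarrow> (\<exists>\<alpha> \<beta> \<delta>0 \<delta>1. \<delta>0 \<in> subF q \<and> \<delta>1 \<in> subF q \<and>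
      v = [\<alpha>, \<alpha> ^ q, \<delta>0, \<beta>, \<beta> ^ q, \<delta>1])"

definition Sigma5 :: "nat \<Rightarrow> ('a::field) list set set" where
  "Sigma5 q = {ptof v | v. sigvec q v \<and> v \<noteq> replicate 6 0}"

definition Pi4 :: "nat \<Rightarrow> ('a::field) list set set" where
  "Pi4 q = {P \<in> Sigma5 q. \<forall>v\<in>P. v ! 5 = 0}"

definition Quad :: "nat \<Rightarrow> ('a::field) list set set" where
  "Quad q = {P \<in> Pi4 q. \<forall>v\<in>P. (v ! 2)^2 + v ! 0 * v ! 4 + v ! 1 * v ! 3 = 0}"

definition hform :: "nat \<Rightarrow> 'a::field \<Rightarrow> 'a list \<Rightarrow> 'a list \<Rightarrow> 'a" where
  "hform q \<omega> X Y =
     \<omega> * X!0 * (Y!3)^q + \<omega>^q * X!0 * (Y!5)^q + \<omega>^q * X!1 * (Y!4)^q + \<omega> * X!1 * (Y!5)^q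
   + X!2 * (Y!5)^q + \<omega>^q * X!3 * (Y!0)^q + \<omega> * X!4 * (Y!1)^q + \<omega> * X!5 * (Y!0)^q
   + \<omega>^q * X!5 * (Y!1)^q + X!5 * (Y!2)^q"

definition perp :: "nat \<Rightarrow> 'a::field \<Rightarrow> 'a list set \<Rightarrow> 'a list set set" where
  "perp q \<omega> P = {R \<in> Sigma5 q. \<forall>x\<in>P. \<forall>y\<in>R. hform q \<omega> x y = 0}"

definition matvec :: "('a::field) list list \<Rightarrow> 'a list \<Rightarrow> 'a list" where
  "matvec M v = map (\<lambda>r. sum_list (map2 (*) r v)) M"

definition Mabcd :: "nat \<Rightarrow> 'a::field \<Rightarrow> 'a \<Rightarrow> 'a \<Rightarrow> 'a \<Rightarrow> 'a \<Rightarrow> 'a list list" where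
  "Mabcd q \<omega> a b c d =
    [[a^2, 0, 0, 0, c^2, c * (a + c * \<omega>^q) / \<omega>],
     [0, a^(2*q), 0, c^(2*q), 0, c^q * (a^q + c^q * \<omega>) / \<omega>^q],
     [a*b, a^q * b^q, 1, c^q * d^q, c*d,
        d * (a + c * \<omega>^q) / \<omega> + d^q * (a^q + c^q * \<omega>) / \<omega>^q + 1 / \<omega>^(q+1)],
     [0, b^(2*q), 0, d^(2*q), 0, (d^q * (b^q + d^q * \<omega>) + \<omega>) / \<omega>^q],
     [b^2, 0, 0, 0, d^2, (d * (b + d * \<omega>^q) + \<omega>^q) / \<omega>],
     [0, 0, 0, 0, 0, 1]]"

definition projmap :: "('a::field) list list \<Rightarrow> 'a list set \<Rightarrow> 'a list set" where
  "projmap M = restrict (\<lambda>P. matvec M ` P) PG5"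

definition Ggrp :: "nat \<Rightarrow> 'a::field \<Rightarrow> ('a list set \<Rightarrow> 'a list set) set" where
  "Ggrp q \<omega> = {projmap (Mabcd q \<omega> a b c d) | a b c d. a * d + b * c = 1}"

definition Sgam :: "nat \<Rightarrow> 'a::field \<Rightarrow> 'a \<Rightarrow> 'a list set" where
  "Sgam q \<omega> \<gamma> = ptof [\<gamma> / \<omega>, \<gamma>^q / \<omega>^q, \<omega>^q * \<gamma> / \<omega> + \<omega> * \<gamma>^q / \<omega>^q, 1, 1, 1]"

definition comb4 :: "(nat \<Rightarrow> 'a::field) \<Rightarrow> (nat \<Rightarrow> 'a list) \<Rightarrow> 'a list" where
  "comb4 l u = map (\<lambda>i. \<Sum>j<4. l j * (u j ! i)) [0..<6]"

definition frame4 :: "nat \<Rightarrow> (nat \<Rightarrow> ('a::field) list) \<Rightarrow> bool" where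
  "frame4 q u \<longleftrightarrow> (\<forall>j<4. sigvec q (u j)) \<and>
     (\<forall>l. (\<forall>j<4. l j \<in> subF q) \<and> comb4 l u = replicate 6 0 \<longrightarrow> (\<forall>j<4. l j = (0::'a)))"

definition solid_of_Sigma :: "nat \<Rightarrow> ('a::field) list set set \<Rightarrow> bool" where
  "solid_of_Sigma q T \<longleftrightarrow> (\<exists>u. frame4 q u \<and>
     T = {ptof (comb4 l u) | l. (\<forall>j<4. l j \<in> subF q) \<and> (\<exists>j<4. l j \<noteq> 0)})"

definition elliptic_quadric_of :: "nat \<Rightarrow> ('a::field) list set set \<Rightarrow> 'a list set set \<Rightarrow> bool" where
  "elliptic_quadric_of q T E \<longleftrightarrow> (\<exists>u d. frame4 q u \<and> d \<in> subF q \<and>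
     (\<forall>t\<in>subF q. t^2 + t + d \<noteq> 0) \<and>
     T = {ptof (comb4 l u) | l. (\<forall>j<4. l j \<in> subF q) \<and> (\<exists>j<4. l j \<noteq> 0)} \<and>
     E = {ptof (comb4 l u) | l. (\<forall>j<4. l j \<in> subF q) \<and> (\<exists>j<4. l j \<noteq> 0) \<and>
            l 0 * l 1 + (l 2)^2 + l 2 * l 3 + d * (l 3)^2 = 0})"

end

theory Submission
  imports Defs "HOL-Number_Theory.Residues"
begin
lemma fermat_ff:
  fixes x :: "'a::{field,finite}"
  shows "x ^ card (UNIV :: 'a set) = x"
proof (cases "x = 0")
  case False
  have "x * (\<Prod>y\<in>UNIV-{0}. x * y) = x * x ^ (card (UNIV :: 'a set) - 1) * \<Prod>(UNIV-{0})"
    by (simp add: prod.distrib mult_ac)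
  also have "x * x ^ (card (UNIV :: 'a set) - 1) = x ^ Suc (card (UNIV :: 'a set) - 1)"
    by (subst power_Suc) auto
  also have "Suc (card (UNIV :: 'a set) - 1) = card (UNIV :: 'a set)"
    using finite_UNIV_card_ge_0[where ?'a = 'a] by simp
  also have "(\<Prod>y\<in>UNIV-{0}. x * y) = (\<Prod>y\<in>UNIV-{0}. y)"
    by (rule prod.reindex_bij_witness[of _ "\<lambda>y. y / x" "\<lambda>y. x * y"]) (use False in auto)
  finally show ?thesis
    by simp
qed (use finite_UNIV_card_ge_0[where ?'a = 'a] in auto)

lemma char2_of_card:
  assumes "card (UNIV :: 'a::{field,finite} set) = 2 ^ n"
  shows "(2::'a) = 0"
proof -
  have pos: "CHAR('a) > 0" by (simp add: finite_imp_CHAR_pos)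
  hence pr: "prime CHAR('a)" by (rule prime_CHAR_semidom)
  have "CHAR('a) dvd 2 ^ n" using CHAR_dvd_CARD[where 'a='a] assms by simp
  hence "CHAR('a) dvd 2" using pr prime_dvd_power by blast
  hence "CHAR('a) = 2" using pr by (metis primes_dvd_imp_eq two_is_prime_nat)
  thus ?thesis using of_nat_CHAR[where 'a='a] by simp
qed

locale c2 = fixes om :: "'a::field" assumes two: "(2::'a) = 0"
begin
lemma dbl: "(x::'a) + x = 0"
  using two by (metis mult_2 mult_zero_left)
lemma nb0: "(numeral (Num.Bit0 n) :: 'a) = 0"
  by (subst numeral_Bit0) (rule dbl)
lemma nb1: "(numeral (Num.Bit1 n) :: 'a) = 1"
  by (subst numeral_Bit1) (simp add: dbl)
lemma neg: "-(x::'a) = x"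
  using dbl by (metis add_eq_0_iff)
lemma diff: "(x::'a) - y = x + y"
  by (simp add: neg)
lemmas c2s = nb0 nb1 neg diff
lemma swap: "((a::'a) = b + c) \<longleftrightarrow> (b = a + c)"
  by (metis add_diff_cancel diff)
lemma eq_shift: "(a::'a) + b = c \<Longrightarrow> a = c + b"
  by (metis add.assoc add_0_right dbl)
lemma swap0: "((a::'a) + b = 0) \<longleftrightarrow> (a = b)"
  using swap[of a 0 b] by (auto simp: add.commute)
lemma sq_add: "((x::'a)+y)^2 = x^2+y^2"
  by (simp add: ring_distribs power2_eq_square c2s mult_ac add_ac)
lemma pow2k_add: "((x::'a)+y)^(2^k) = x^(2^k)+y^(2^k)"
proof (induction k)
  case (Suc k)
  have "(x+y)^(2^Suc k) = ((x+y)^(2^k))^2" by (simp add: power_mult[symmetric] mult.commute)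
  also have "\<dots> = (x^(2^k))^2 + (y^(2^k))^2" using Suc sq_add by simp
  finally show ?case by (simp add: power_mult[symmetric] mult.commute)
qed simp
lemma sq_inj: "(x::'a)^2 = y^2 \<longleftrightarrow> x = y"
proof
  assume "x^2 = y^2"
  hence "(x+y)^2 = 0" by (simp add: sq_add dbl)
  thus "x = y" by (metis add_eq_0_iff neg power_eq_0_iff zero_neq_numeral)
qed simp
end

locale ffq =
  fixes q k :: nat and \<omega> \<gamma> :: "'a::{field,finite}"
  assumes qk: "q = 2^k" and kpos: "0 < k"
    and card: "card (UNIV :: 'a set) = q^2"
    and om1: "\<omega> \<notin> subF q" and om2: "\<omega> + \<omega>^q = 1"
    and irr: "irreducible [:\<gamma>, 1, 1:]"
begin

lemma two: "(2::'a) = 0"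
  using card qk by (intro char2_of_card[of "2*k"]) (simp add: power_mult[symmetric] mult.commute)

sublocale c2 \<omega> by unfold_locales (rule two)

lemma qpos: "q > 0" using qk by simp

lemma frob_add: "((x::'a)+y)^q = x^q + y^q"
  using qk pow2k_add by simp

lemma frob_qq: "((x::'a)^q)^q = x"
proof -
  have "(x^q)^q = x ^ card (UNIV::'a set)" by (simp add: card power_mult[symmetric] power2_eq_square)
  thus ?thesis by (simp add: fermat_ff)
qed

lemma zero_q[simp]: "(0::'a)^q = 0" using qpos by simp

lemma subF_iff: "x \<in> subF q \<longleftrightarrow> x^q = x" by (simp add: subF_def)

lemma om_nz: "\<omega> \<noteq> 0" using om1 by (auto simp: subF_def)
lemma omq: "\<omega>^q = 1 + \<omega>"
proof -
  have "\<omega>^q = (\<omega> + \<omega>^q) + \<omega>" by (simp add: add_ac add.assoc[symmetric] dbl)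
  thus ?thesis using om2 by (simp add: add.commute)
qed
lemma om1_nz: "1 + \<omega> \<noteq> 0"
proof
  assume "1 + \<omega> = 0"
  hence "\<omega>^q = 0" using omq by simp
  thus False using om_nz by simp
qed

lemma noroot: "s^2 + s + \<gamma> \<noteq> 0"
proof
  assume h: "s^2 + s + \<gamma> = 0"
  have "poly [:\<gamma>, 1, 1:] s = 0" using h by (simp add: algebra_simps power2_eq_square)
  hence "[:-s, 1:] dvd [:\<gamma>, 1, 1:]" by (metis poly_eq_0_iff_dvd)
  then obtain r where r: "[:\<gamma>, 1, 1:] = [:-s, 1:] * r" by (elim dvdE)
  from irreducibleD[OF irr r] have "is_unit [:-s, 1:] \<or> is_unit r" .
  moreover have "\<not> is_unit [:-s, 1::'a:]" by (simp add: is_unit_poly_iff)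
  moreover have "\<not> is_unit r"
  proof
    assume "is_unit r"
    hence "degree r = 0" by (auto simp: is_unit_poly_iff)
    moreover have "r \<noteq> 0" using \<open>is_unit r\<close> by auto
    ultimately have dA: "degree ([:-s, 1:] * r) = 1"
      by (subst degree_mult_eq) auto
    have "degree [:\<gamma>, 1, 1::'a:] = 1" using dA unfolding r[symmetric] .
    thus False by simp
  qed
  ultimately show False by blast
qed

definition Qf :: "'a \<Rightarrow> 'a \<Rightarrow> 'a" where "Qf x y = \<gamma>*x^2 + x*y + y^2"

lemma aniso: "Qf x y = 0 \<Longrightarrow> x = 0 \<and> y = 0"
proof (rule ccontr)
  assume h: "Qf x y = 0" "\<not> (x = 0 \<and> y = 0)"
  show False
  proof (cases "x = 0")
    case True
    with h show False by (simp add: Qf_def)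
  next
    case False
    have "(y/x)^2 + y/x + \<gamma> = (Qf x y) / x^2" using False
      by (simp add: Qf_def field_simps power2_eq_square)
    with h noroot show False by simp
  qed
qed

lemma two_family:
  assumes det: "r11*r22 + r12*r21 = 1" and q1: "Qf r11 r21 = \<gamma>" and q2: "Qf r12 r22 = 1"
  shows "(r11 = r12 + r22 \<and> r21 = r12*\<gamma>) \<or> (r11 = r22 \<and> r21 = r12*\<gamma> + r22)"
proof -
  define e where "e = r11 + (r12 + r22)"
  define f where "f = r21 + r12*\<gamma>"
  have "e*r22 + r12*f = (r11*r22 + r12*r21) + Qf r12 r22"
    by (simp add: e_def f_def Qf_def ring_distribs power2_eq_square c2s mult_ac add_ac)
  hence ef: "e*r22 + r12*f = 0" using det q2 by (simp add: dbl)
  have nz: "\<not>(r12 = 0 \<and> r22 = 0)" using q2 by (auto simp: Qf_def)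
  obtain s where s: "e = s*r12" "f = s*r22"
  proof (cases "r22 = 0")
    case True
    hence "r12 \<noteq> 0" using nz by simp
    hence "f = 0" using ef True by simp
    show ?thesis by (rule that[of "e/r12"]) (use \<open>r12 \<noteq> 0\<close> \<open>f = 0\<close> True in auto)
  next
    case False
    have "e*r22 = r12*f" using ef by (simp add: swap0)
    hence "e = (f/r22)*r12" using False by (simp add: field_simps)
    thus ?thesis by (rule that) (use False in simp)
  qed
  have r11: "r11 = r12 + r22 + s*r12" using eq_shift[OF s(1)[unfolded e_def]] by (simp add: add_ac)
  have r21: "r21 = r12*\<gamma> + s*r22" using eq_shift[OF s(2)[unfolded f_def]] by (simp add: add_ac)
  have "Qf r11 r21 = (\<gamma> + s + s^2) * Qf r12 r22"
    unfolding r11 r21 Qf_def by (simp add: ring_distribs power2_eq_square c2s mult_ac add_ac)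
  hence "s*(s+1) = 0" using q1 q2 by (simp add: ring_distribs power2_eq_square c2s mult_ac add_ac)
  hence "s = 0 \<or> s + 1 = 0" by simp
  hence "s = 0 \<or> s = 1" by (auto simp: swap0)
  thus ?thesis using r11 r21 by (auto simp: dbl add_ac)
qed

end

context ffq begin

fun det4 :: "'a\<times>'a\<times>'a\<times>'a \<Rightarrow> 'a" where "det4 (a,b,c,d) = a*d + b*c"
fun mul2 :: "'a\<times>'a\<times>'a\<times>'a \<Rightarrow> 'a\<times>'a\<times>'a\<times>'a \<Rightarrow> 'a\<times>'a\<times>'a\<times>'a" where
  "mul2 (r11,r12,r21,r22) (a,b,c,d) = (r11*a + r12*c, r11*b + r12*d, r21*a + r22*c, r21*b + r22*d)"
fun adj :: "'a\<times>'a\<times>'a\<times>'a \<Rightarrow> 'a\<times>'a\<times>'a\<times>'a" where "adj (a,b,c,d) = (d,b,c,a)"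
fun bet :: "'a\<times>'a\<times>'a\<times>'a \<Rightarrow> 'a" where "bet (a,b,c,d) = \<gamma>*a*b + a*d + c*d"
definition Tr :: "'a \<Rightarrow> 'a" where "Tr x = x + x^q"
fun phi :: "'a\<times>'a\<times>'a\<times>'a \<Rightarrow> 'a\<times>'a\<times>'a" where
  "phi (a,b,c,d) = (Qf a c, Qf b d, Tr (bet (a,b,c,d) / \<omega>))"
definition SL :: "('a\<times>'a\<times>'a\<times>'a) set" where "SL = {A. det4 A = 1}"
definition StP :: "('a\<times>'a\<times>'a\<times>'a) set" where "StP = {(b+d, b, b*\<gamma>, d) | b d. Qf b d = 1}"

lemmas alg = ring_distribs power2_eq_square c2s mult_ac add_ac

lemma mul2_assoc: "mul2 (mul2 X Y) Z = mul2 X (mul2 Y Z)"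
  by (cases X; cases Y; cases Z) (simp add: alg)
lemma det_mul: "det4 (mul2 X Y) = det4 X * det4 Y"
  by (cases X; cases Y) (simp add: alg)
lemma adj_mul: "mul2 (adj A) A = (det4 A, 0, 0, det4 A)"
  by (cases A) (simp add: alg dbl)
lemma mul_adj: "mul2 A (adj A) = (det4 A, 0, 0, det4 A)"
  by (cases A) (simp add: alg dbl)
lemma mul_id: "mul2 (1,0,0,1) A = A" "mul2 A (1,0,0,1) = A"
  by (cases A; simp)+

lemma Qf_lin: "Qf (m11*x + m12*y) (m21*x + m22*y) = x^2 * Qf m11 m21 + x*y*(m11*m22 + m12*m21) + y^2 * Qf m12 m22"
  by (simp add: Qf_def alg)

lemma R1_Q: "Qf ((b0+d0)*x + b0*y) (b0*\<gamma>*x + d0*y) = Qf b0 d0 * Qf x y"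
  by (simp add: Qf_def alg)
lemma R1_bet: "bet (mul2 (b0+d0, b0, b0*\<gamma>, d0) A) = Qf b0 d0 * bet A"
  by (cases A) (simp add: Qf_def alg)
lemma R2_bet: "bet (mul2 (d0, b0, b0*\<gamma> + d0, d0) A) = Qf b0 d0 * (bet A + det4 A)"
  by (cases A) (simp add: Qf_def alg)


lemma Tr_add: "Tr (x+y) = Tr x + Tr y" by (simp add: Tr_def frob_add add_ac)

lemma Tr_inv_om: "Tr (1/\<omega>) \<noteq> 0"
proof -
  have "Tr (1/\<omega>) = 1/\<omega> + 1/(1+\<omega>)" by (simp add: Tr_def power_divide omq)
  also have "\<dots> = 1/(\<omega>*(1+\<omega>))" using om_nz om1_nz by (simp add: field_simps alg dbl)
  finally show ?thesis using om_nz om1_nz by simp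
qed

lemma fiber_fwd:
  assumes A: "A \<in> SL" and R: "R \<in> StP"
  shows "mul2 R A \<in> SL \<and> phi (mul2 R A) = phi A"
proof -
  obtain b0 d0 where R': "R = (b0+d0, b0, b0*\<gamma>, d0)" and Q0: "Qf b0 d0 = 1" using R by (auto simp: StP_def)
  obtain a b c d where Ad: "A = (a,b,c,d)" by (cases A)
  have "det4 R = Qf b0 d0" by (simp add: R' Qf_def alg)
  hence "det4 (mul2 R A) = 1" using A Q0 by (simp add: det_mul SL_def)
  moreover have "phi (mul2 R A) = phi A"
  proof -
    have "bet (mul2 R A) = bet A" using R1_bet Q0 R' by simp
    moreover have "Qf ((b0+d0)*a + b0*c) (b0*\<gamma>*a + d0*c) = Qf a c" using R1_Q Q0 by simp
    moreover have "Qf ((b0+d0)*b + b0*d) (b0*\<gamma>*b + d0*d) = Qf b d" using R1_Q Q0 by simp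
    ultimately show ?thesis by (simp add: R' Ad)
  qed
  ultimately show ?thesis by (simp add: SL_def)
qed

lemma fiber_bwd:
  assumes A: "A \<in> SL" and A': "A' \<in> SL" and ph: "phi A' = phi A"
  shows "\<exists>R\<in>StP. A' = mul2 R A"
proof -
  obtain a b c d where Ad: "A = (a,b,c,d)" by (cases A)
  obtain a' b' c' d' where Ad': "A' = (a',b',c',d')" by (cases A')
  have dA: "a*d + b*c = 1" using A Ad by (simp add: SL_def)
  have dA': "a'*d' + b'*c' = 1" using A' Ad' by (simp add: SL_def)
  have q1: "Qf a' c' = Qf a c" and q2: "Qf b' d' = Qf b d"
    and tb: "Tr (bet A' / \<omega>) = Tr (bet A / \<omega>)" using ph Ad Ad' by auto
  define r11 where "r11 = a'*d + b'*c"
  define r12 where "r12 = a'*b + b'*a"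
  define r21 where "r21 = c'*d + d'*c"
  define r22 where "r22 = c'*b + d'*a"
  have Rdef: "mul2 A' (adj A) = (r11,r12,r21,r22)" by (simp add: Ad Ad' r11_def r12_def r21_def r22_def)
  have AA: "mul2 (adj A) A = (1,0,0,1)" using adj_mul[of A] dA Ad by (simp add: mult.commute)
  have RA: "A' = mul2 (r11,r12,r21,r22) A"
    using mul2_assoc[of A' "adj A" A] unfolding AA mul_id Rdef by simp
  have "det4 (mul2 A' (adj A)) = 1"
    unfolding det_mul using dA dA' by (simp add: Ad Ad' mult.commute)
  hence detR: "r11*r22 + r12*r21 = 1" unfolding Rdef by simp
  have "Qf r11 r21 = d^2 * Qf a' c' + d*c*(a'*d' + b'*c') + c^2 * Qf b' d'"
    unfolding r11_def r21_def using Qf_lin[of a' d b' c c' d'] by (simp add: mult_ac)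
  also have "\<dots> = d^2 * Qf a c + d*c*(a*d + b*c) + c^2 * Qf b d" using q1 q2 dA dA' by simp
  also have "\<dots> = Qf (a*d + b*c) (c*d + d*c)" using Qf_lin[of a d b c c d] by (simp add: mult_ac)
  also have "\<dots> = \<gamma>" using dA by (simp add: dbl Qf_def mult.commute)
  finally have Q1: "Qf r11 r21 = \<gamma>" .
  have "Qf r12 r22 = b^2 * Qf a' c' + b*a*(a'*d' + b'*c') + a^2 * Qf b' d'"
    unfolding r12_def r22_def using Qf_lin[of a' b b' a c' d'] by (simp add: mult_ac)
  also have "\<dots> = b^2 * Qf a c + b*a*(a*d + b*c) + a^2 * Qf b d" using q1 q2 dA dA' by simp
  also have "\<dots> = Qf (a*b + b*a) (c*b + d*a)" using Qf_lin[of a b b a c d] by (simp add: mult_ac)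
  also have "\<dots> = 1" using dA by (simp add: dbl Qf_def mult.commute add.commute)
  finally have Q2: "Qf r12 r22 = 1" .
  from two_family[OF detR Q1 Q2]
  show ?thesis
  proof
    assume f1: "r11 = r12 + r22 \<and> r21 = r12*\<gamma>"
    have "(r11,r12,r21,r22) \<in> StP" using f1 Q2 by (auto simp: StP_def)
    thus ?thesis using RA by blast
  next
    assume f2: "r11 = r22 \<and> r21 = r12*\<gamma> + r22"
    have "A' = mul2 (r22, r12, r12*\<gamma> + r22, r22) A" using RA f2 by simp
    hence "bet A' = Qf r12 r22 * (bet A + det4 A)"
      using R2_bet[of r22 r12 A] by simp
    hence "bet A' = bet A + 1" using Q2 dA Ad by simp
    hence "Tr (bet A' / \<omega>) = Tr (bet A / \<omega>) + Tr (1/\<omega>)" by (simp add: add_divide_distrib Tr_add)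
    hence "Tr (1/\<omega>) = 0" using tb by simp
    with Tr_inv_om show ?thesis by simp
  qed
qed

end

lemma uniform_fibers:
  assumes fin: "finite A" and k: "\<And>x. x \<in> A \<Longrightarrow> card {y\<in>A. f y = f x} = k"
  shows "k * card (f ` A) = card A"
proof -
  define C where "C = (\<lambda>z. {y\<in>A. f y = z}) ` (f ` A)"
  have "k * card C = card (\<Union>C)"
  proof (rule card_partition)
    show "finite C" using fin by (simp add: C_def)
    show "finite (\<Union>C)" using fin by (auto simp: C_def)
    show "\<And>c. c \<in> C \<Longrightarrow> card c = k" using k by (auto simp: C_def)
    show "\<And>c1 c2. c1 \<in> C \<Longrightarrow> c2 \<in> C \<Longrightarrow> c1 \<noteq> c2 \<Longrightarrow> c1 \<inter> c2 = {}" by (auto simp: C_def)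
  qed
  moreover have "\<Union>C = A" by (auto simp: C_def)
  moreover have "card C = card (f ` A)" unfolding C_def
    by (rule card_image) (auto simp: inj_on_def)
  ultimately show ?thesis by simp
qed

lemma nat_cancel_aux:
  fixes k n :: nat assumes "k*(n-1) = n*n - 1" "n > 1" shows "k = n+1"
proof -
  have "n*n - 1 = (n+1)*(n-1)" using assms(2) by (simp add: algebra_simps)
  hence h: "k*(n-1) = (n+1)*(n-1)" using assms(1) by simp
  have "n - 1 \<noteq> 0" using assms(2) by simp
  thus ?thesis using h mult_right_cancel by blast
qed

context ffq begin

lemma q_ge2: "q \<ge> 2"
proof -
  have "(2::nat)^1 \<le> 2^k" using kpos by (intro power_increasing) auto
  thus ?thesis using qk by simp
qed

lemma card_UNIV_a: "card (UNIV::'a set) = q^2" by (rule card)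

lemma sqrt_ex: "\<exists>s::'a. s^2 = t"
proof -
  have "inj (\<lambda>x::'a. x^2)" by (auto simp: inj_def sq_inj)
  hence "surj (\<lambda>x::'a. x^2)" by (rule finite_UNIV_inj_surj[OF finite_UNIV])
  thus ?thesis by (metis surjD)
qed

definition K1 :: "('a\<times>'a) set" where "K1 = {p. Qf (fst p) (snd p) = 1}"

lemma Qf_scale: "Qf (s*x) (s*y) = s^2 * Qf x y" by (simp add: Qf_def alg)

lemma card_K1: "card K1 = q^2 + 1"
proof -
  define U where "U = (UNIV::('a\<times>'a) set) - {(0,0)}"
  define f where "f = (\<lambda>p::'a\<times>'a. Qf (fst p) (snd p))"
  have finU: "finite U" by (simp add: U_def)
  have cU: "card U = q^2*q^2 - 1"
  proof -
    have "card (UNIV::('a\<times>'a) set) = q^2*q^2" by (simp add: card_UNIV_a UNIV_Times_UNIV[symmetric] card_cartesian_product del: UNIV_Times_UNIV)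
    thus ?thesis by (simp add: U_def card_Diff_singleton)
  qed
  have fib: "card {y\<in>U. f y = f x} = card K1" if x: "x \<in> U" for x
  proof -
    obtain s where s: "s^2 = f x" using sqrt_ex by blast
    have fx: "f x \<noteq> 0"
    proof
      assume "f x = 0"
      hence "fst x = 0 \<and> snd x = 0" using aniso unfolding f_def by blast
      thus False using x by (cases x) (simp add: U_def)
    qed
    hence snz: "s \<noteq> 0" using s by auto
    have "{y\<in>U. f y = f x} = (\<lambda>(u,v). (s*u, s*v)) ` K1"
    proof (intro subset_antisym subsetI)
      fix y assume y: "y \<in> {y\<in>U. f y = f x}"
      obtain u v where yd: "y = (u,v)" by (cases y)
      have "Qf (u/s) (v/s) = 1"
      proof -
        have "Qf u v = s^2 * Qf (u/s) (v/s)" using Qf_scale[of s "u/s" "v/s"] snz by simp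
        thus ?thesis using y yd s fx by (simp add: f_def)
      qed
      hence "(u/s, v/s) \<in> K1" by (simp add: K1_def)
      moreover have "y = (\<lambda>(u,v). (s*u, s*v)) (u/s, v/s)" using snz yd by simp
      ultimately show "y \<in> (\<lambda>(u,v). (s*u, s*v)) ` K1" by blast
    next
      fix y assume "y \<in> (\<lambda>(u,v). (s*u, s*v)) ` K1"
      then obtain u v where uv: "Qf u v = 1" "y = (s*u, s*v)" by (auto simp: K1_def)
      have "f y = f x" using uv Qf_scale s by (simp add: f_def)
      moreover have "y \<noteq> (0,0)" using uv snz by (auto simp: Qf_def)
      ultimately show "y \<in> {y\<in>U. f y = f x}" by (simp add: U_def)
    qed
    moreover have "inj_on (\<lambda>(u,v). (s*u, s*v)) K1" using snz by (auto simp: inj_on_def)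
    ultimately show ?thesis by (simp add: card_image)
  qed
  have img: "f ` U = UNIV - {0}"
  proof (intro Set.set_eqI iffI)
    fix t assume "t \<in> f ` U"
    then obtain p where p: "p \<in> U" "t = f p" by blast
    have "t \<noteq> 0"
    proof
      assume "t = 0"
      hence "fst p = 0 \<and> snd p = 0" using aniso[of "fst p" "snd p"] p unfolding f_def by simp
      thus False using p by (cases p) (simp add: U_def)
    qed
    thus "t \<in> UNIV - {0}" by simp
  next
    fix t :: 'a assume t: "t \<in> UNIV - {0}"
    obtain s where s: "s^2 = t" using sqrt_ex by blast
    have "(0, s) \<in> U" using s t by (auto simp: U_def)
    moreover have "f (0,s) = t" using s by (simp add: f_def Qf_def)
    ultimately show "t \<in> f ` U" by (metis image_eqI)
  qed
  have "card K1 * card (f ` U) = card U" by (rule uniform_fibers[OF finU fib])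
  hence eq: "card K1 * (q^2 - 1) = q^2*q^2 - 1" using img cU by (simp add: card_Diff_singleton card_UNIV_a)
  moreover have "q^2 > 1"
  proof -
    have "2*2 \<le> q*q" by (rule mult_le_mono[OF q_ge2 q_ge2])
    thus ?thesis by (simp add: power2_eq_square)
  qed
  ultimately show ?thesis by (rule nat_cancel_aux)
qed

end

context ffq begin

lemma card_SL: "card SL = q^2 * (q^2*q^2 - 1)"
proof -
  define f where "f = (\<lambda>(a::'a,b::'a,c::'a,d::'a). (a,c))"
  have finSL: "finite SL" by simp
  have fib: "card {y\<in>SL. f y = f x} = q^2" if x: "x \<in> SL" for x
  proof -
    obtain a b c d where xd: "x = (a,b,c,d)" by (cases x)
    have det: "a*d + b*c = 1" using x xd by (simp add: SL_def)
    show ?thesis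
    proof (cases "a = 0")
      case False
      have "{y\<in>SL. f y = f x} = (\<lambda>b'. (a, b', c, (1 + b'*c)/a)) ` UNIV"
      proof (intro Set.set_eqI iffI)
        fix y assume y: "y \<in> {y\<in>SL. f y = f x}"
        obtain a' b' c' d' where yd: "y = (a',b',c',d')" by (cases y)
        have "a' = a" "c' = c" using y yd xd by (auto simp: f_def)
        moreover have "a*d' + b'*c = 1" using y yd calculation by (simp add: SL_def)
        hence "d' = (1 + b'*c)/a" using False by (simp add: eq_shift field_simps)
        ultimately show "y \<in> (\<lambda>b'. (a, b', c, (1 + b'*c)/a)) ` UNIV" using yd by auto
      next
        fix y assume "y \<in> (\<lambda>b'. (a, b', c, (1 + b'*c)/a)) ` UNIV"
        then obtain b' where yd: "y = (a, b', c, (1 + b'*c)/a)" by auto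
        have "a*((1 + b'*c)/a) + b'*c = 1" using False by (simp add: field_simps add.assoc dbl)
        thus "y \<in> {y\<in>SL. f y = f x}" using yd xd by (simp add: SL_def f_def)
      qed
      moreover have "inj (\<lambda>b'. (a, b', c, (1 + b'*c)/a))" by (auto simp: inj_def)
      ultimately show ?thesis by (simp add: card_image card_UNIV_a)
    next
      case True
      hence cnz: "c \<noteq> 0" and bc: "b*c = 1" using det by auto
      have "{y\<in>SL. f y = f x} = (\<lambda>d'::'a. (a, 1/c, c, d')) ` UNIV"
      proof (intro Set.set_eqI iffI)
        fix y assume y: "y \<in> {y\<in>SL. f y = f x}"
        obtain a' b' c' d' where yd: "y = (a',b',c',d')" by (cases y)
        have "a' = a" "c' = c" using y yd xd by (auto simp: f_def)
        moreover have "b'*c = 1" using y yd calculation True by (simp add: SL_def)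
        hence "b' = 1/c" using cnz by (simp add: field_simps)
        ultimately show "y \<in> (\<lambda>d'::'a. (a, 1/c, c, d')) ` UNIV" using yd by auto
      next
        fix y assume "y \<in> (\<lambda>d'::'a. (a, 1/c, c, d')) ` UNIV"
        then obtain d' where yd: "y = (a, 1/c, c, d')" by auto
        thus "y \<in> {y\<in>SL. f y = f x}" using xd True cnz by (simp add: SL_def f_def)
      qed
      moreover have "inj (\<lambda>d'::'a. (a, 1/c, c, d'))" by (auto simp: inj_def)
      ultimately show ?thesis by (simp add: card_image card_UNIV_a)
    qed
  qed
  have img: "f ` SL = UNIV - {(0,0)}"
  proof (intro Set.set_eqI iffI)
    fix p assume "p \<in> f ` SL"
    then obtain a b c d where "(a,b,c,d) \<in> SL" "p = (a,c)" by (auto simp: f_def)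
    thus "p \<in> UNIV - {(0,0)}" by (auto simp: SL_def)
  next
    fix p :: "'a\<times>'a" assume p: "p \<in> UNIV - {(0,0)}"
    obtain a c where pd: "p = (a,c)" by (cases p)
    show "p \<in> f ` SL"
    proof (cases "a = 0")
      case False
      have "(a,0,c,1/a) \<in> SL" using False by (simp add: SL_def)
      moreover have "f (a,0,c,1/a) = p" by (simp add: f_def pd)
      ultimately show ?thesis by (metis image_eqI)
    next
      case True
      hence "c \<noteq> 0" using p pd by auto
      hence "(a,1/c,c,0) \<in> SL" by (simp add: SL_def)
      moreover have "f (a,1/c,c,0) = p" by (simp add: f_def pd)
      ultimately show ?thesis by (metis image_eqI)
    qed
  qed
  have "q^2 * card (f ` SL) = card SL" by (rule uniform_fibers[OF finSL fib])
  moreover have "card (f ` SL) = q^2*q^2 - 1"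
  proof -
    have "card (UNIV::('a\<times>'a) set) = q^2*q^2"
      by (simp add: card_UNIV_a UNIV_Times_UNIV[symmetric] card_cartesian_product del: UNIV_Times_UNIV)
    thus ?thesis by (simp add: img card_Diff_singleton)
  qed
  ultimately show ?thesis by simp
qed

lemma card_StP: "card StP = q^2 + 1"
proof -
  have "StP = (\<lambda>(b,d). (b+d, b, b*\<gamma>, d)) ` K1" by (auto simp: StP_def K1_def)
  moreover have "inj_on (\<lambda>(b,d). (b+d, b, b*\<gamma>, d)) K1" by (auto simp: inj_on_def)
  ultimately show ?thesis by (simp add: card_image card_K1)
qed

lemma card_orbitP: "card (phi ` SL) = q^2 * (q^2 - 1)"
proof -
  have finSL: "finite SL" by simp
  have fib: "card {y\<in>SL. phi y = phi x} = q^2 + 1" if x: "x \<in> SL" for x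
  proof -
    have "{y\<in>SL. phi y = phi x} = (\<lambda>R. mul2 R x) ` StP"
    proof (intro Set.set_eqI iffI)
      fix y assume "y \<in> {y\<in>SL. phi y = phi x}"
      thus "y \<in> (\<lambda>R. mul2 R x) ` StP" using fiber_bwd[OF x] by blast
    next
      fix y assume "y \<in> (\<lambda>R. mul2 R x) ` StP"
      thus "y \<in> {y\<in>SL. phi y = phi x}" using fiber_fwd[OF x] by blast
    qed
    moreover have "inj_on (\<lambda>R. mul2 R x) StP"
    proof (rule inj_onI)
      fix R R' assume "mul2 R x = mul2 R' x"
      hence "mul2 (mul2 R x) (adj x) = mul2 (mul2 R' x) (adj x)" by simp
      moreover have "mul2 x (adj x) = (1,0,0,1)" using mul_adj[of x] x by (simp add: SL_def)
      ultimately show "R = R'" by (simp add: mul2_assoc mul_id)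
    qed
    ultimately show ?thesis by (simp add: card_image card_StP)
  qed
  have "(q^2+1) * card (phi ` SL) = card SL" by (rule uniform_fibers[OF finSL fib])
  moreover have "card SL = (q^2+1) * (q^2 * (q^2 - 1))"
  proof -
    have "\<And>n::nat. n*(n*n-1) = (n+1)*(n*(n-1))"
    proof -
      fix n :: nat show "n*(n*n-1) = (n+1)*(n*(n-1))" by (cases n) (simp_all add: algebra_simps)
    qed
    thus ?thesis by (simp only: card_SL)
  qed
  ultimately have "(q^2+1) * card (phi ` SL) = (q^2+1) * (q^2 * (q^2 - 1))" by (simp only:)
  thus ?thesis by (simp only: mult_left_cancel)
qed

end

context ffq begin

definition dS :: 'a where "dS = \<omega>^q*\<gamma>/\<omega> + \<omega>*\<gamma>^q/\<omega>^q"
definition sv :: "'a list" where "sv = [\<gamma>/\<omega>, \<gamma>^q/\<omega>^q, dS, 1, 1, 1]"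
fun Vf :: "'a\<times>'a\<times>'a \<Rightarrow> 'a list" where
  "Vf (u1,u2,t) = [u1/\<omega>, (u1/\<omega>)^q, t + dS + 1/(\<omega>*(1+\<omega>)), ((u2+\<omega>^q)/\<omega>)^q, (u2+\<omega>^q)/\<omega>, 1]"

lemmas frob = frob_add power_mult_distrib power_divide frob_qq omq

lemma pow2q: "(x::'a)^(2*q) = (x^q)^2" by (metis power_mult mult.commute)
lemma pow2q': "(x::'a)^(q*2) = (x^q)^2" by (rule power_mult)
lemma om_sq_nz: "1 + \<omega>*\<omega> \<noteq> 0"
proof -
  have "(1+\<omega>)^2 = 1 + \<omega>^2" by (simp add: sq_add)
  hence "1 + \<omega>*\<omega> = (1+\<omega>)^2" by (simp add: power2_eq_square)
  thus ?thesis using om1_nz by simp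
qed
lemma omq1: "\<omega>^(q+1) = \<omega>*(1+\<omega>)" by (simp add: omq mult.commute)
lemma one_om_q: "(1+\<omega>)^q = \<omega>" by (simp add: frob_add omq add.assoc[symmetric] dbl)

lemma mul_om_eq: "\<omega> * x = y \<Longrightarrow> x = y / \<omega>"
  using om_nz by (simp add: field_simps)

lemma om_div: "\<omega> * (x / \<omega>) = x" using om_nz by simp
lemma om_div': "\<omega> * (x * y / \<omega>) = x * y" using om_nz by simp

lemma row1: "a^2*\<gamma>/\<omega> + (c^2 + c*(a + c*\<omega>^q)/\<omega>) = Qf a c / \<omega>"
proof (rule mul_om_eq)
  have "\<omega> * (a^2*\<gamma>/\<omega> + (c^2 + c*(a + c*\<omega>^q)/\<omega>)) = a^2*\<gamma> + (\<omega>*c^2 + c*(a + c*(1+\<omega>)))"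
    by (simp only: distrib_left om_div omq)
  also have "\<dots> = Qf a c" by (simp add: Qf_def alg)
  finally show "\<omega> * (a^2*\<gamma>/\<omega> + (c^2 + c*(a + c*\<omega>^q)/\<omega>)) = Qf a c" .
qed

lemma sqq: "((x::'a)^2)^q = x^(2*q)" by (simp add: power_mult)

lemma row2: "a^(2*q)*\<gamma>^q/\<omega>^q + (c^(2*q) + c^q*(a^q + c^q*\<omega>)/\<omega>^q) = (Qf a c / \<omega>)^q"
proof -
  have "(a^2*\<gamma>/\<omega> + (c^2 + c*(a + c*\<omega>^q)/\<omega>))^q = a^(2*q)*\<gamma>^q/\<omega>^q + (c^(2*q) + c^q*(a^q + c^q*\<omega>)/\<omega>^q)"
    by (simp add: frob_add power_mult_distrib power_divide frob_qq sqq)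
  thus ?thesis using row1 by simp
qed

lemma row5: "b^2*\<gamma>/\<omega> + (d^2 + (d*(b + d*\<omega>^q) + \<omega>^q)/\<omega>) = (Qf b d + \<omega>^q) / \<omega>"
proof (rule mul_om_eq)
  have "\<omega> * (b^2*\<gamma>/\<omega> + (d^2 + (d*(b + d*\<omega>^q) + \<omega>^q)/\<omega>)) = b^2*\<gamma> + (\<omega>*d^2 + (d*(b + d*(1+\<omega>)) + (1+\<omega>)))"
    by (simp only: distrib_left om_div omq)
  also have "\<dots> = Qf b d + \<omega>^q" by (simp add: Qf_def omq alg)
  finally show "\<omega> * (b^2*\<gamma>/\<omega> + (d^2 + (d*(b + d*\<omega>^q) + \<omega>^q)/\<omega>)) = Qf b d + \<omega>^q" .
qed

lemma row4: "b^(2*q)*\<gamma>^q/\<omega>^q + (d^(2*q) + (d^q*(b^q + d^q*\<omega>) + \<omega>)/\<omega>^q) = ((Qf b d + \<omega>^q) / \<omega>)^q"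
proof -
  have "(b^2*\<gamma>/\<omega> + (d^2 + (d*(b + d*\<omega>^q) + \<omega>^q)/\<omega>))^q = b^(2*q)*\<gamma>^q/\<omega>^q + (d^(2*q) + (d^q*(b^q + d^q*\<omega>) + \<omega>)/\<omega>^q)"
    by (simp add: frob_add power_mult_distrib power_divide frob_qq sqq)
  thus ?thesis using row5 by simp
qed

lemma row3a: "a*b*\<gamma>/\<omega> + c*d + d*(a + c*\<omega>^q)/\<omega> = bet (a,b,c,d) / \<omega>"
proof (rule mul_om_eq)
  have "\<omega> * (a*b*\<gamma>/\<omega> + c*d + d*(a + c*\<omega>^q)/\<omega>) = a*b*\<gamma> + \<omega>*(c*d) + d*(a + c*(1+\<omega>))"
    by (simp only: distrib_left om_div omq)
  also have "\<dots> = bet (a,b,c,d)" by (simp add: alg)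
  finally show "\<omega> * (a*b*\<gamma>/\<omega> + c*d + d*(a + c*\<omega>^q)/\<omega>) = bet (a,b,c,d)" .
qed

lemma row3: "a*b*\<gamma>/\<omega> + (a^q*b^q*\<gamma>^q/\<omega>^q + (dS + (c^q*d^q + (c*d + (d*(a + c*\<omega>^q)/\<omega> + d^q*(a^q + c^q*\<omega>)/\<omega>^q + 1/(\<omega>*\<omega>^q))))))
   = Tr (bet (a,b,c,d) / \<omega>) + dS + 1/(\<omega>*(1+\<omega>))"
proof -
  have e1: "(a*b*\<gamma>/\<omega> + c*d + d*(a + c*\<omega>^q)/\<omega>)^q = a^q*b^q*\<gamma>^q/\<omega>^q + c^q*d^q + d^q*(a^q + c^q*\<omega>)/\<omega>^q"
    by (simp add: frob_add power_mult_distrib power_divide frob_qq)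
  have "a*b*\<gamma>/\<omega> + (a^q*b^q*\<gamma>^q/\<omega>^q + (dS + (c^q*d^q + (c*d + (d*(a + c*\<omega>^q)/\<omega> + d^q*(a^q + c^q*\<omega>)/\<omega>^q + 1/(\<omega>*\<omega>^q))))))
     = (a*b*\<gamma>/\<omega> + c*d + d*(a + c*\<omega>^q)/\<omega>) + (a^q*b^q*\<gamma>^q/\<omega>^q + c^q*d^q + d^q*(a^q + c^q*\<omega>)/\<omega>^q) + dS + 1/(\<omega>*\<omega>^q)"
    by (simp add: add_ac)
  also have "\<dots> = Tr (bet (a,b,c,d) / \<omega>) + dS + 1/(\<omega>*(1+\<omega>))"
    unfolding e1[symmetric] row3a Tr_def by (simp add: omq)
  finally show ?thesis .
qed

lemma Vec: "matvec (Mabcd q \<omega> a b c d) sv = Vf (phi (a,b,c,d))"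
proof -
  have "matvec (Mabcd q \<omega> a b c d) sv =
    [a^2*\<gamma>/\<omega> + (c^2 + c*(a + c*\<omega>^q)/\<omega>),
     a^(2*q)*\<gamma>^q/\<omega>^q + (c^(2*q) + c^q*(a^q + c^q*\<omega>)/\<omega>^q),
     a*b*\<gamma>/\<omega> + (a^q*b^q*\<gamma>^q/\<omega>^q + (dS + (c^q*d^q + (c*d + (d*(a + c*\<omega>^q)/\<omega> + d^q*(a^q + c^q*\<omega>)/\<omega>^q + 1/(\<omega>*\<omega>^q)))))),
     b^(2*q)*\<gamma>^q/\<omega>^q + (d^(2*q) + (d^q*(b^q + d^q*\<omega>) + \<omega>)/\<omega>^q),
     b^2*\<gamma>/\<omega> + (d^2 + (d*(b + d*\<omega>^q) + \<omega>^q)/\<omega>), 1]"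
    by (simp add: matvec_def Mabcd_def sv_def)
  also have "\<dots> = Vf (phi (a,b,c,d))"
    unfolding row1 row2 row3 row4 row5 by simp
  finally show ?thesis .
qed

end

context ffq begin

lemma tele: "(\<Sum>i<n. x^(2^i))^2 + (\<Sum>i<n. x^(2^i)) = (x::'a)^(2^n) + x"
proof (induction n)
  case 0 show ?case by (simp add: dbl)
next
  case (Suc n)
  let ?S = "\<Sum>i<n. x^(2^i)"
  have "(\<Sum>i<Suc n. x^(2^i))^2 + (\<Sum>i<Suc n. x^(2^i)) = (?S^2 + ?S) + ((x^(2^n))^2 + x^(2^n))"
    by (simp add: sq_add add_ac)
  also have "(x^(2^n))^2 = x^(2^Suc n)" by (simp add: power_mult[symmetric] mult.commute)
  finally show ?case using Suc by (simp add: alg)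
qed

lemma tele2: "(\<Sum>i<n. ((x::'a)^(2^Suc i) + x^(2^i))) = x^(2^n) + x"
proof (induction n)
  case 0 show ?case by (simp add: dbl)
next
  case (Suc n)
  thus ?case by (simp add: alg)
qed

definition AT :: "'a \<Rightarrow> 'a" where "AT x = (\<Sum>i<2*k. x^(2^i))"

lemma pow_card: "(x::'a)^(2^(2*k)) = x"
proof -
  have "(2::nat)^(2*k) = q^2" using qk by (simp add: power_mult[symmetric] mult.commute)
  thus ?thesis using fermat_ff[of x] card by simp
qed

lemma AT_wp: "AT (s^2 + s) = 0"
proof -
  have "AT (s^2+s) = (\<Sum>i<2*k. (s^(2^Suc i) + s^(2^i)))"
    unfolding AT_def
    by (rule sum.cong) (simp_all add: pow2k_add power_mult[symmetric] mult.commute)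
  also have "\<dots> = 0" using tele2 pow_card by (simp add: dbl)
  finally show ?thesis .
qed

lemma card_wp: "card ((\<lambda>s::'a. s^2 + s) ` UNIV) = 2^(2*k-1)"
proof -
  have fib: "card {y\<in>UNIV. y^2 + y = x^2 + x} = 2" for x :: 'a
  proof -
    have "{y\<in>UNIV. y^2 + y = x^2 + x} = {x, x+1}"
    proof (intro Set.set_eqI iffI)
      fix y assume "y \<in> {y\<in>UNIV. y^2 + y = x^2 + x}"
      hence h: "y^2 + y = x^2 + x" by simp
      have "(y+x)*(y+x+1) = (y^2+y) + (x^2+x)" by (simp add: alg)
      hence "(y+x)*(y+x+1) = 0" using h by (simp add: dbl)
      hence "y + x = 0 \<or> y + x + 1 = 0" by simp
      moreover have "y + x + 1 = 0 \<Longrightarrow> y = x + 1" using eq_shift[of "y+x" 1 0] eq_shift[of y x "1"] by simp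
      ultimately show "y \<in> {x, x+1}" using swap0[of y x] by auto
    next
      fix y assume "y \<in> {x, x+1}"
      thus "y \<in> {y\<in>UNIV. y^2 + y = x^2 + x}" by (auto simp: sq_add alg)
    qed
    moreover have "x \<noteq> x + 1" by simp
    ultimately show ?thesis by simp
  qed
  have "2 * card ((\<lambda>s::'a. s^2 + s) ` UNIV) = card (UNIV::'a set)"
    by (rule uniform_fibers) (use fib in simp_all)
  moreover have "card (UNIV::'a set) = 2 * 2^(2*k-1)"
    using card qk kpos by (simp add: power_mult[symmetric] mult.commute power_Suc[symmetric])
  ultimately show ?thesis by simp
qed

lemma AT_root: assumes "AT x = 0" shows "\<exists>s. s^2 + s = x"
proof -
  define P :: "'a poly" where "P = (\<Sum>i<2*k. Polynomial.monom 1 (2^i))"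
  have polyP: "poly P y = AT y" for y by (simp add: P_def AT_def poly_sum poly_monom)
  have "Polynomial.coeff P (2^(2*k-1)) = (\<Sum>i<2*k. if i = 2*k-1 then 1 else 0)"
    unfolding P_def Polynomial.coeff_sum by (rule sum.cong) auto
  also have "\<dots> = 1" using kpos by simp
  finally have "P \<noteq> 0" by auto
  have "degree P \<le> 2^(2*k-1)" unfolding P_def
  proof (rule degree_sum_le)
    fix i assume "i \<in> {..<2*k}"
    hence "(2::nat)^i \<le> 2^(2*k-1)" by (intro power_increasing) auto
    thus "degree (Polynomial.monom (1::'a) (2^i)) \<le> 2^(2*k-1)" using degree_monom_le order.trans by blast
  qed simp
  hence "card {y. poly P y = 0} \<le> 2^(2*k-1)" using card_poly_roots_bound[OF \<open>P \<noteq> 0\<close>] by linarith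
  hence ck: "card {y. AT y = 0} \<le> 2^(2*k-1)" by (simp add: polyP)
  have sub: "(\<lambda>s::'a. s^2 + s) ` UNIV \<subseteq> {y. AT y = 0}" using AT_wp by auto
  have "(\<lambda>s::'a. s^2 + s) ` UNIV = {y. AT y = 0}"
    by (rule card_subset_eq[OF _ sub]) (use ck card_wp card_mono[OF _ sub] in auto)
  hence "x \<in> (\<lambda>s::'a. s^2 + s) ` UNIV" using assms by simp
  then obtain s where "x = s^2 + s" by blast
  thus ?thesis by blast
qed

lemma AT_gamma: "AT \<gamma> \<noteq> 0"
proof
  assume "AT \<gamma> = 0"
  then obtain s where "s^2 + s = \<gamma>" using AT_root by blast
  hence "s^2 + s + \<gamma> = 0" by (simp add: add.assoc dbl)
  thus False using noroot by simp
qed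

lemma sum_split: "(\<Sum>i<m+(n::nat). f i) = (\<Sum>i<m. f i) + (\<Sum>i<n. (f (m+i) :: 'a))"
  by (induct n) (simp_all add: add_ac)

lemma frob_sum: "(\<Sum>i\<in>I. f i)^q = (\<Sum>i\<in>I. (f i :: 'a)^q)"
  by (induction I rule: infinite_finite_induct) (simp_all add: frob_add)

lemma AT_split: "AT x = (\<Sum>i<k. x^(2^i)) + (\<Sum>i<k. x^(2^i))^q"
proof -
  have "AT x = (\<Sum>i<k+k. x^(2^i))" by (simp add: AT_def mult_2)
  also have "\<dots> = (\<Sum>i<k. x^(2^i)) + (\<Sum>i<k. x^(2^(k+i)))"
    by (rule sum_split)
  also have "(\<Sum>i<k. x^(2^(k+i))) = (\<Sum>i<k. x^(2^i))^q"
    unfolding frob_sum using qk by (intro sum.cong) (simp_all add: power_add power_mult[symmetric] mult.commute)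
  finally show ?thesis .
qed

lemma elliptic_d: "t \<in> subF q \<Longrightarrow> t^2 + t + (\<gamma> + \<gamma>^q)^2 \<noteq> 0"
proof
  assume t: "t \<in> subF q" and h: "t^2 + t + (\<gamma> + \<gamma>^q)^2 = 0"
  define g where "g = \<gamma> + \<gamma>^q"
  define r where "r = t + g"
  have gq: "g^q = g" by (simp add: g_def frob_add frob_qq add.commute)
  have rq: "r^q = r" using t gq by (simp add: r_def frob_add subF_iff)
  have hr: "r^2 + r = g" using h by (simp add: r_def g_def[symmetric] sq_add) (simp add: alg dbl eq_shift)
  define y where "y = (\<Sum>i<k. \<gamma>^(2^i))"
  have hy: "y^2 + y = g" unfolding y_def g_def using tele[of \<gamma> k] qk by (simp add: add.commute)
  have "(y+r)*(y+r+1) = (y^2+y) + (r^2+r)" by (simp add: alg)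
  hence "(y+r)*(y+r+1) = 0" using hr hy by (simp add: dbl)
  hence "y = r \<or> y = r + 1" by (auto simp: swap0 add.assoc eq_shift)
  hence "y^q = y" using rq by (auto simp: frob_add)
  hence "AT \<gamma> = 0" using AT_split[of \<gamma>] by (simp add: y_def[symmetric] dbl)
  thus False using AT_gamma by simp
qed

end

context ffq begin

definition g0 :: 'a where "g0 = \<gamma> + \<gamma>^q"
definition h0 :: 'a where "h0 = \<gamma>*(1+\<omega>) + \<gamma>^q*\<omega>"
definition wv :: "'a \<Rightarrow> 'a \<Rightarrow> 'a list" where
  "wv \<alpha> \<beta> = [\<alpha>, \<alpha>^q, \<alpha> + \<alpha>^q + \<gamma>*\<beta>^q + \<gamma>^q*\<beta>, \<beta>, \<beta>^q, 0]"
definition ua :: "nat \<Rightarrow> 'a" where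
  "ua j = (if j = 0 then 1 else if j = 1 then h0^2 else if j = 2 then \<omega> else 0)"
definition ub :: "nat \<Rightarrow> 'a" where
  "ub j = (if j = 1 then \<omega> else if j = 3 then 1 else 0)"
definition uu :: "nat \<Rightarrow> 'a list" where "uu j = wv (ua j) (ub j)"
definition al :: "(nat \<Rightarrow> 'a) \<Rightarrow> 'a" where "al l = l 0 + l 1 * h0^2 + l 2 * \<omega>"
definition be :: "(nat \<Rightarrow> 'a) \<Rightarrow> 'a" where "be l = l 3 + l 1 * \<omega>"

lemma h0q: "h0^q = h0"
  by (simp add: h0_def frob_add power_mult_distrib frob_qq one_om_q omq add.commute two)
lemma g0q: "g0^q = g0"
  by (simp add: g0_def frob_add frob_qq add.commute)

lemma h0q2: "(h0^2)^q = h0^2" "(h0*h0)^q = h0*h0"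
  by (simp_all add: power_mult_distrib h0q power2_eq_square)

lemma comb_wv:
  assumes l: "\<forall>j<4. l j \<in> subF q"
  shows "comb4 l uu = wv (al l) (be l)"
proof -
  have lq: "l 0 ^ q = l 0" "l 1 ^ q = l 1" "l 2 ^ q = l 2" "l 3 ^ q = l 3" "l (Suc 0) ^ q = l (Suc 0)"
    using l by (auto simp: subF_iff)
  have s4: "\<And>f::nat\<Rightarrow>'a. (\<Sum>j<4. f j) = f 0 + f 1 + f 2 + f 3"
    by (simp add: eval_nat_numeral add_ac)
  have u6: "[0..<6] = [0,1,2,3,4,5]" by (simp add: upt_rec)
  show ?thesis
    unfolding comb4_def u6 s4
    by (simp add: uu_def wv_def ua_def ub_def al_def be_def frob_add power_mult_distrib h0q lq alg)
qed

lemma hform_sv: "hform q \<omega> sv [\<alpha>, \<alpha>', \<delta>, \<beta>, \<beta>', 0] = \<gamma>*\<beta>^q + \<gamma>^q*\<beta>'^q + (\<omega> + \<omega>^q)*(\<alpha>'^q + \<alpha>^q) + \<delta>^q"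
  unfolding hform_def sv_def using om_nz om1_nz
  by (simp add: power_divide omq field_simps alg)

lemma hform_scale:
  assumes "length X = 6" "length Y = 6"
  shows "hform q \<omega> (map ((*) cA) X) (map ((*) cB) Y) = cA * cB^q * hform q \<omega> X Y"
  using assms by (simp add: hform_def power_mult_distrib ring_distribs mult_ac)

definition Qx :: "'a list \<Rightarrow> 'a" where "Qx v = (v ! 2)^2 + v ! 0 * v ! 4 + v ! 1 * v ! 3"

lemma Qx_scale: "length v = 6 \<Longrightarrow> Qx (map ((*) c) v) = c^2 * Qx v"
  by (simp add: Qx_def power_mult_distrib ring_distribs mult_ac power2_eq_square)

lemma wv_len: "length (wv a b) = 6" by (simp add: wv_def)

lemma sigvec_wv: "sigvec q (wv \<alpha> \<beta>)"
  unfolding sigvec_def wv_def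
  by (rule exI[of _ \<alpha>], rule exI[of _ \<beta>], rule exI[of _ "\<alpha> + \<alpha>^q + \<gamma>*\<beta>^q + \<gamma>^q*\<beta>"], rule exI[of _ 0])
     (simp add: subF_iff frob_add power_mult_distrib frob_qq add_ac)

lemma wv_zero: "wv \<alpha> \<beta> = replicate 6 0 \<longleftrightarrow> \<alpha> = 0 \<and> \<beta> = 0"
  by (auto simp: wv_def numeral_eq_Suc qpos)

lemma lin_indep: assumes "x \<in> subF q" "y \<in> subF q" "x + y*\<omega> = 0" shows "x = 0 \<and> y = 0"
proof -
  have "(x + y*\<omega>)^q = x + y*(1+\<omega>)" using assms(1,2) by (simp add: subF_iff frob_add power_mult_distrib omq)
  hence "x + y*(1+\<omega>) = 0" using assms(3) by simp
  moreover have "y = (x + y*(1+\<omega>)) + (x + y*\<omega>)" by (simp add: alg)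
  ultimately have "y = 0" using assms(3) by simp
  thus ?thesis using assms(3) by simp
qed

lemma K4: assumes l: "\<forall>j<4. l j \<in> subF q" and "al l = 0" "be l = 0" shows "\<forall>j<4. l j = 0"
proof -
  have l0: "l 0 \<in> subF q" "l 1 \<in> subF q" "l 2 \<in> subF q" "l 3 \<in> subF q" using l by auto
  have "l 3 = 0 \<and> l 1 = 0" using lin_indep[OF l0(4) l0(2)] assms(3) by (simp add: be_def)
  moreover hence "l 0 = 0 \<and> l 2 = 0" using lin_indep[OF l0(1) l0(3)] assms(2) by (simp add: al_def)
  ultimately show ?thesis by (auto simp: less_Suc_eq numeral_eq_Suc)
qed

lemma K3: "\<exists>l. (\<forall>j<4. l j \<in> subF q) \<and> al l = \<alpha> \<and> be l = \<beta>"
proof -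
  define l1 where "l1 = \<beta> + \<beta>^q"
  define l2 where "l2 = \<alpha> + \<alpha>^q"
  define l3 where "l3 = \<beta> + l1*\<omega>"
  define l0 where "l0 = \<alpha> + l1*h0^2 + l2*\<omega>"
  define l where "l = (\<lambda>j::nat. if j = 0 then l0 else if j = 1 then l1 else if j = 2 then l2 else l3)"
  have q1: "l1^q = l1" by (simp add: l1_def frob_add frob_qq add.commute)
  have q2: "l2^q = l2" by (simp add: l2_def frob_add frob_qq add.commute)
  have q3: "l3^q = l3" by (simp add: l3_def q1 frob_add power_mult_distrib omq) (simp add: l1_def alg)
  have q0: "l0^q = l0" by (simp add: l0_def q1 q2 frob_add power_mult_distrib omq h0q h0q2) (simp add: l2_def alg)
  have "\<forall>j<4. l j \<in> subF q" using q0 q1 q2 q3 by (auto simp: l_def subF_iff)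
  moreover have "al l = \<alpha>" by (simp add: al_def l_def l0_def alg)
  moreover have "be l = \<beta>" by (simp add: be_def l_def l3_def alg)
  ultimately show ?thesis by blast
qed

lemma Qx_nf:
  assumes l: "\<forall>j<4. l j \<in> subF q"
  shows "Qx (wv (al l) (be l)) = l 0 * l 1 + (l 2)^2 + l 2 * l 3 + g0^2 * (l 3)^2"
proof -
  have lq: "l 0 ^ q = l 0" "l 1 ^ q = l 1" "l 2 ^ q = l 2" "l 3 ^ q = l 3" "l (Suc 0) ^ q = l (Suc 0)"
    using l by (auto simp: subF_iff)
  have alq: "(al l)^q = l 0 + l 1 * h0^2 + l 2 * (1+\<omega>)"
    by (simp add: al_def frob_add power_mult_distrib lq h0q h0q2 omq)
  have beq: "(be l)^q = l 3 + l 1 * (1+\<omega>)"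
    by (simp add: be_def frob_add power_mult_distrib lq omq)
  have dl: "al l + (al l)^q + \<gamma>*(be l)^q + \<gamma>^q*(be l) = l 2 + g0 * l 3 + h0 * l 1"
    unfolding alq beq by (simp add: al_def be_def g0_def h0_def alg)
  have "Qx (wv (al l) (be l)) = (al l + (al l)^q + \<gamma>*(be l)^q + \<gamma>^q*(be l))^2 + al l * (be l)^q + (al l)^q * be l"
    by (simp add: Qx_def wv_def)
  also have "\<dots> = (l 2 + g0 * l 3 + h0 * l 1)^2 + al l * (be l)^q + (al l)^q * be l"
    unfolding dl ..
  also have "\<dots> = l 0 * l 1 + (l 2)^2 + l 2 * l 3 + g0^2 * (l 3)^2"
    unfolding alq beq by (simp add: al_def be_def alg)
  finally show ?thesis .
qed

end

context ffq begin

lemma ptof_mem: "y \<in> ptof v \<longleftrightarrow> (\<exists>c. c \<noteq> 0 \<and> y = map ((*) c) v)"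
  by (auto simp: ptof_def)

lemma map_one: "map ((*) (1::'a)) v = v" by (induct v) simp_all

lemma self_in: "(v::'a list) \<in> ptof v"
  unfolding ptof_mem using map_one[of v] by (intro exI[of _ 1]) simp

lemma sv_len: "length sv = 6" by (simp add: sv_def)

lemma Sgam_eq: "Sgam q \<omega> \<gamma> = ptof sv" by (simp add: Sgam_def sv_def dS_def)

lemma map_nth5: "length v = 6 \<Longrightarrow> map f v ! 5 = f (v ! 5)" by simp

lemma wv5: "wv a b ! 5 = 0" by (simp add: wv_def)

lemma hform_wv: "hform q \<omega> sv (wv \<alpha> \<beta>) = 0"
proof -
  have "hform q \<omega> sv (wv \<alpha> \<beta>) = \<gamma>*\<beta>^q + \<gamma>^q*(\<beta>^q)^q + (\<omega> + \<omega>^q)*((\<alpha>^q)^q + \<alpha>^q) + (\<alpha> + \<alpha>^q + \<gamma>*\<beta>^q + \<gamma>^q*\<beta>)^q"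
    unfolding wv_def by (rule hform_sv)
  also have "\<dots> = 0" by (simp add: om2 frob_add power_mult_distrib frob_qq alg)
  finally show ?thesis .
qed

definition Lset :: "'a list set set" where
  "Lset = {ptof (comb4 l uu) | l. (\<forall>j<4. l j \<in> subF q) \<and> (\<exists>j<4. l j \<noteq> 0)}"

lemma in_T_wv:
  assumes "\<not> (\<alpha> = 0 \<and> \<beta> = 0)"
  shows "ptof (wv \<alpha> \<beta>) \<in> Pi4 q \<inter> perp q \<omega> (Sgam q \<omega> \<gamma>)"
proof -
  have S: "ptof (wv \<alpha> \<beta>) \<in> Sigma5 q"
    unfolding Sigma5_def using sigvec_wv wv_zero assms by blast
  moreover have "\<forall>v\<in>ptof (wv \<alpha> \<beta>). v ! 5 = 0"
    by (auto simp: ptof_mem wv_len wv5)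
  moreover have "\<forall>x\<in>Sgam q \<omega> \<gamma>. \<forall>y\<in>ptof (wv \<alpha> \<beta>). hform q \<omega> x y = 0"
  proof (intro ballI)
    fix x y assume x: "x \<in> Sgam q \<omega> \<gamma>" and y: "y \<in> ptof (wv \<alpha> \<beta>)"
    obtain cA where x': "x = map ((*) cA) sv" using x by (auto simp: Sgam_eq ptof_mem)
    obtain cB where y': "y = map ((*) cB) (wv \<alpha> \<beta>)" using y by (auto simp: ptof_mem)
    show "hform q \<omega> x y = 0" unfolding x' y'
      by (subst hform_scale) (simp_all only: sv_len wv_len hform_wv mult_zero_right)
  qed
  ultimately show ?thesis by (simp add: Pi4_def perp_def)
qed

lemma T_char: "Pi4 q \<inter> perp q \<omega> (Sgam q \<omega> \<gamma>) = Lset"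
proof (intro Set.set_eqI iffI)
  fix P assume "P \<in> Lset"
  then obtain l where l: "\<forall>j<4. l j \<in> subF q" "\<exists>j<4. l j \<noteq> 0" and P: "P = ptof (comb4 l uu)"
    by (auto simp: Lset_def)
  have "\<not> (al l = 0 \<and> be l = 0)" using K4[OF l(1)] l(2) by blast
  thus "P \<in> Pi4 q \<inter> perp q \<omega> (Sgam q \<omega> \<gamma>)" using in_T_wv P comb_wv[OF l(1)] by simp
next
  fix P assume P: "P \<in> Pi4 q \<inter> perp q \<omega> (Sgam q \<omega> \<gamma>)"
  then obtain v where v: "P = ptof v" "sigvec q v" "v \<noteq> replicate 6 0"
    by (auto simp: Pi4_def Sigma5_def)
  then obtain \<alpha> \<beta> \<delta>0 \<delta>1 where d: "\<delta>0 \<in> subF q" "\<delta>1 \<in> subF q" and vd: "v = [\<alpha>, \<alpha>^q, \<delta>0, \<beta>, \<beta>^q, \<delta>1]"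
    by (auto simp: sigvec_def)
  have "v ! 5 = 0" using P v(1) self_in[of v] by (auto simp: Pi4_def)
  hence d1: "\<delta>1 = 0" by (simp add: vd)
  have "sv \<in> Sgam q \<omega> \<gamma>" by (simp add: Sgam_eq self_in)
  hence "hform q \<omega> sv v = 0" using P v(1) self_in[of v] by (auto simp: perp_def)
  hence "\<gamma>*\<beta>^q + \<gamma>^q*(\<beta>^q)^q + (\<omega> + \<omega>^q)*((\<alpha>^q)^q + \<alpha>^q) + \<delta>0^q = 0"
    using hform_sv[of \<alpha> "\<alpha>^q" \<delta>0 \<beta> "\<beta>^q"] by (simp add: vd d1)
  hence "(\<alpha> + \<alpha>^q + \<gamma>*\<beta>^q + \<gamma>^q*\<beta>) + \<delta>0 = 0" using d(1)
    by (simp add: om2 frob_qq subF_iff add_ac)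
  hence "\<alpha> + \<alpha>^q + \<gamma>*\<beta>^q + \<gamma>^q*\<beta> = \<delta>0" by (simp only: swap0)
  hence "\<delta>0 = \<alpha> + \<alpha>^q + \<gamma>*\<beta>^q + \<gamma>^q*\<beta>" by simp
  hence vw: "v = wv \<alpha> \<beta>" by (simp add: vd d1 wv_def)
  obtain l where l: "\<forall>j<4. l j \<in> subF q" "al l = \<alpha>" "be l = \<beta>" using K3 by blast
  have cw: "comb4 l uu = v" using comb_wv[OF l(1)] l vw by simp
  have "\<exists>j<4. l j \<noteq> 0"
  proof (rule ccontr)
    assume "\<not> (\<exists>j<4. l j \<noteq> 0)"
    hence "al l = 0" "be l = 0" by (auto simp: al_def be_def)
    hence "v = replicate 6 0" using vw l wv_zero by simp
    thus False using v(3) by simp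
  qed
  thus "P \<in> Lset" using l(1) cw v(1) by (auto simp: Lset_def)
qed

definition Eset :: "'a list set set" where
  "Eset = {ptof (comb4 l uu) | l. (\<forall>j<4. l j \<in> subF q) \<and> (\<exists>j<4. l j \<noteq> 0) \<and>
            l 0 * l 1 + (l 2)^2 + l 2 * l 3 + g0^2 * (l 3)^2 = 0}"

lemma Quad_iff: "P \<in> Quad q \<longleftrightarrow> P \<in> Pi4 q \<and> (\<forall>v\<in>P. Qx v = 0)"
  by (simp add: Quad_def Qx_def)

lemma E_char: "Pi4 q \<inter> perp q \<omega> (Sgam q \<omega> \<gamma>) \<inter> Quad q = Eset"
proof (intro Set.set_eqI iffI)
  fix P assume P: "P \<in> Pi4 q \<inter> perp q \<omega> (Sgam q \<omega> \<gamma>) \<inter> Quad q"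
  hence "P \<in> Lset" using T_char by auto
  then obtain l where l: "\<forall>j<4. l j \<in> subF q" "\<exists>j<4. l j \<noteq> 0" and Pd: "P = ptof (comb4 l uu)"
    by (auto simp: Lset_def)
  have "Qx (comb4 l uu) = 0" using P Pd self_in[of "comb4 l uu"] by (auto simp: Quad_iff)
  hence "l 0 * l 1 + (l 2)^2 + l 2 * l 3 + g0^2 * (l 3)^2 = 0" using comb_wv[OF l(1)] Qx_nf[OF l(1)] by simp
  thus "P \<in> Eset" using l Pd by (auto simp: Eset_def)
next
  fix P assume "P \<in> Eset"
  then obtain l where l: "\<forall>j<4. l j \<in> subF q" "\<exists>j<4. l j \<noteq> 0"
      and nf: "l 0 * l 1 + (l 2)^2 + l 2 * l 3 + g0^2 * (l 3)^2 = 0" and Pd: "P = ptof (comb4 l uu)"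
    by (auto simp: Eset_def)
  have PT: "P \<in> Pi4 q \<inter> perp q \<omega> (Sgam q \<omega> \<gamma>)" using T_char l Pd by (auto simp: Lset_def)
  have "\<forall>v\<in>P. Qx v = 0"
  proof
    fix v assume "v \<in> P"
    then obtain c where "v = map ((*) c) (wv (al l) (be l))" using Pd comb_wv[OF l(1)] by (auto simp: ptof_mem)
    thus "Qx v = 0" using Qx_scale[OF wv_len] Qx_nf[OF l(1)] nf by simp
  qed
  thus "P \<in> Pi4 q \<inter> perp q \<omega> (Sgam q \<omega> \<gamma>) \<inter> Quad q" using PT by (simp add: Quad_iff)
qed

lemma frame_uu: "frame4 q uu"
  unfolding frame4_def
proof (rule conjI)
  show "\<forall>j<4. sigvec q (uu j)" by (simp add: uu_def sigvec_wv)
next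
  show "\<forall>l. (\<forall>j<4. l j \<in> subF q) \<and> comb4 l uu = replicate 6 0 \<longrightarrow> (\<forall>j<4. l j = 0)"
  proof (rule allI, rule impI)
  fix l :: "nat \<Rightarrow> 'a" assume h: "(\<forall>j<4. l j \<in> subF q) \<and> comb4 l uu = replicate 6 0"
  have "comb4 l uu = wv (al l) (be l)" using comb_wv h by blast
  hence "wv (al l) (be l) = replicate 6 0" using h by simp
  hence "al l = 0 \<and> be l = 0" by (simp only: wv_zero)
  thus "\<forall>j<4. l j = 0" using K4 h by blast
  qed
qed

lemma g0_sub: "g0^2 \<in> subF q" by (simp add: subF_iff power_mult_distrib g0q power2_eq_square)

lemma part12: "solid_of_Sigma q (Pi4 q \<inter> perp q \<omega> (Sgam q \<omega> \<gamma>))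
   \<and> elliptic_quadric_of q (Pi4 q \<inter> perp q \<omega> (Sgam q \<omega> \<gamma>)) (Pi4 q \<inter> perp q \<omega> (Sgam q \<omega> \<gamma>) \<inter> Quad q)"
proof
  show "solid_of_Sigma q (Pi4 q \<inter> perp q \<omega> (Sgam q \<omega> \<gamma>))"
    unfolding solid_of_Sigma_def T_char Lset_def by (intro exI[of _ uu] conjI frame_uu refl)
  have nr: "\<forall>t\<in>subF q. t^2 + t + g0^2 \<noteq> 0" using elliptic_d by (simp add: g0_def)
  show "elliptic_quadric_of q (Pi4 q \<inter> perp q \<omega> (Sgam q \<omega> \<gamma>)) (Pi4 q \<inter> perp q \<omega> (Sgam q \<omega> \<gamma>) \<inter> Quad q)"
    unfolding elliptic_quadric_of_def E_char unfolding T_char Lset_def Eset_def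
    by (intro exI[of _ uu] exI[of _ "g0^2"] conjI frame_uu g0_sub nr refl)
qed

end

context ffq begin

lemma sum_map2_scale: "sum_list (map2 (*) r (map ((*) c) v)) = c * sum_list (map2 (*) r (v::'a list))"
proof (induction r arbitrary: v)
  case Nil thus ?case by simp
next
  case (Cons a r) thus ?case by (cases v) (simp_all add: ring_distribs mult_ac)
qed

lemma matvec_scale: "matvec M (map ((*) c) v) = map ((*) c) (matvec M (v::'a list))"
  by (simp add: matvec_def sum_map2_scale)

lemma PG5_mem: "length (v::'a list) = 6 \<Longrightarrow> v ! 5 = 1 \<Longrightarrow> ptof v \<in> PG5"
  unfolding PG5_def by (rule CollectI, rule exI[of _ v]) auto

lemma projmap_ptof: "ptof (v::'a list) \<in> PG5 \<Longrightarrow> projmap M (ptof v) = ptof (matvec M v)"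
proof -
  assume P: "ptof v \<in> PG5"
  have "matvec M ` ptof v = ptof (matvec M v)"
  proof (intro Set.set_eqI iffI)
    fix y assume "y \<in> matvec M ` ptof v"
    then obtain c where "c \<noteq> 0" "y = matvec M (map ((*) c) v)" by (auto simp: ptof_mem)
    thus "y \<in> ptof (matvec M v)" by (auto simp: ptof_mem matvec_scale)
  next
    fix y assume "y \<in> ptof (matvec M v)"
    then obtain c where c: "c \<noteq> 0" "y = map ((*) c) (matvec M v)" by (auto simp: ptof_mem)
    hence "y = matvec M (map ((*) c) v)" by (simp add: matvec_scale)
    moreover have "map ((*) c) v \<in> ptof v" using c by (auto simp: ptof_mem)
    ultimately show "y \<in> matvec M ` ptof v" by blast
  qed
  thus ?thesis using P by (simp add: projmap_def)
qed

lemma ptof_last1: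
  assumes "ptof v = ptof (w::'a list)" "v ! 5 = 1" "w ! 5 = 1" "length w = 6"
  shows "v = w"
proof -
  have "v \<in> ptof w" using assms(1) self_in[of v] by simp
  then obtain c where c: "v = map ((*) c) w" by (auto simp: ptof_mem)
  hence "c = 1" using assms by simp
  thus ?thesis using c map_one by simp
qed

lemma Vf_len: "length (Vf x) = 6" by (cases x) simp
lemma Vf_5: "Vf x ! 5 = 1" by (cases x) simp

lemma Vf_inj: "Vf x = Vf y \<Longrightarrow> x = y"
proof -
  assume h: "Vf x = Vf y"
  obtain u1 u2 t where x: "x = (u1,u2,t)" by (cases x)
  obtain v1 v2 s where y: "y = (v1,v2,s)" by (cases y)
  have "u1/\<omega> = v1/\<omega>" "t + dS + 1/(\<omega>*(1+\<omega>)) = s + dS + 1/(\<omega>*(1+\<omega>))" "(u2+\<omega>^q)/\<omega> = (v2+\<omega>^q)/\<omega>"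
    using h by (simp_all add: x y)
  thus ?thesis using om_nz by (simp add: x y)
qed

lemma sv_id: "Vf (phi (1,0,0,1)) = sv"
proof -
  have t: "Tr (1/\<omega>) = 1/(\<omega>*(1+\<omega>))"
  proof -
    have "Tr (1/\<omega>) = 1/\<omega> + 1/(1+\<omega>)" by (simp add: Tr_def power_divide omq)
    also have "\<dots> = 1/(\<omega>*(1+\<omega>))" using om_nz om1_nz by (simp add: field_simps alg dbl)
    finally show ?thesis .
  qed
  have "(1 + \<omega>^q)/\<omega> = 1" using om_nz by (simp add: omq alg)
  thus ?thesis using t by (simp add: sv_def Qf_def power_divide dbl two add.assoc[symmetric])
qed

definition gm :: "'a\<times>'a\<times>'a\<times>'a \<Rightarrow> 'a list set \<Rightarrow> 'a list set" where
  "gm A = (case A of (a,b,c,d) \<Rightarrow> projmap (Mabcd q \<omega> a b c d))"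

lemma Ggrp_eq: "Ggrp q \<omega> = gm ` SL"
  by (auto simp: Ggrp_def SL_def gm_def image_def)

lemma gm_S: "gm A (Sgam q \<omega> \<gamma>) = ptof (Vf (phi A))"
proof -
  obtain a b c d where A: "A = (a,b,c,d)" by (cases A)
  have "ptof sv \<in> PG5" by (rule PG5_mem) (simp_all add: sv_def)
  thus ?thesis by (simp add: gm_def A Sgam_eq projmap_ptof Vec)
qed

lemma S_eq: "Sgam q \<omega> \<gamma> = ptof (Vf (phi (1,0,0,1)))" by (simp only: Sgam_eq sv_id)

lemma gm_S_iff: "gm A (Sgam q \<omega> \<gamma>) = gm B (Sgam q \<omega> \<gamma>) \<longleftrightarrow> phi A = phi B"
proof
  assume "gm A (Sgam q \<omega> \<gamma>) = gm B (Sgam q \<omega> \<gamma>)"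
  hence "Vf (phi A) = Vf (phi B)" unfolding gm_S by (rule ptof_last1) (simp_all add: Vf_5 Vf_len)
  thus "phi A = phi B" by (rule Vf_inj)
qed (simp add: gm_S)

end

context ffq begin

lemma I_SL: "(1,0,0,1) \<in> SL" by (simp add: SL_def)

lemma Mlen: "length (matvec (Mabcd q \<omega> a b c d) v) = 6" by (simp add: matvec_def Mabcd_def)
lemma cols:
  "matvec (Mabcd q \<omega> a b c d) [1,0,0,0,0,1] ! 0 = a^2 + matvec (Mabcd q \<omega> a b c d) [0,0,0,0,0,1] ! 0"
  "matvec (Mabcd q \<omega> a b c d) [1,0,0,0,0,1] ! 4 = b^2 + matvec (Mabcd q \<omega> a b c d) [0,0,0,0,0,1] ! 4"
  "matvec (Mabcd q \<omega> a b c d) [0,0,0,0,1,1] ! 0 = c^2 + matvec (Mabcd q \<omega> a b c d) [0,0,0,0,0,1] ! 0"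
  "matvec (Mabcd q \<omega> a b c d) [0,0,0,0,1,1] ! 4 = d^2 + matvec (Mabcd q \<omega> a b c d) [0,0,0,0,0,1] ! 4"
  by (simp_all add: matvec_def Mabcd_def)

lemma gm_vec: "length (e::'a list) = 6 \<Longrightarrow> e ! 5 = 1 \<Longrightarrow> gm (a,b,c,d) (ptof e) = ptof (matvec (Mabcd q \<omega> a b c d) e)"
  by (simp add: gm_def projmap_ptof PG5_mem)

lemma gm_vec_eq:
  assumes "gm (a,b,c,d) = gm (a',b',c',d')" "length (e::'a list) = 6" "e ! 5 = 1"
    "matvec (Mabcd q \<omega> a b c d) e ! 5 = 1" "matvec (Mabcd q \<omega> a' b' c' d') e ! 5 = 1"
  shows "matvec (Mabcd q \<omega> a b c d) e = matvec (Mabcd q \<omega> a' b' c' d') e"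
proof -
  have "ptof (matvec (Mabcd q \<omega> a b c d) e) = ptof (matvec (Mabcd q \<omega> a' b' c' d') e)"
    using assms gm_vec[OF assms(2,3)] by metis
  thus ?thesis by (rule ptof_last1) (simp_all add: Mlen assms)
qed

lemma gm_inj: "inj_on gm SL"
proof (rule inj_onI)
  fix A B assume "A \<in> SL" "B \<in> SL" and eq: "gm A = gm B"
  obtain a b c d where A: "A = (a,b,c,d)" by (cases A)
  obtain a' b' c' d' where B: "B = (a',b',c',d')" by (cases B)
  have eq': "gm (a,b,c,d) = gm (a',b',c',d')" using eq A B by simp
  have e6: "matvec (Mabcd q \<omega> a b c d) [0,0,0,0,0,1] = matvec (Mabcd q \<omega> a' b' c' d') [0,0,0,0,0,1]"
    by (rule gm_vec_eq[OF eq']) (simp_all add: matvec_def Mabcd_def)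
  have e16: "matvec (Mabcd q \<omega> a b c d) [1,0,0,0,0,1] = matvec (Mabcd q \<omega> a' b' c' d') [1,0,0,0,0,1]"
    by (rule gm_vec_eq[OF eq']) (simp_all add: matvec_def Mabcd_def)
  have e56: "matvec (Mabcd q \<omega> a b c d) [0,0,0,0,1,1] = matvec (Mabcd q \<omega> a' b' c' d') [0,0,0,0,1,1]"
    by (rule gm_vec_eq[OF eq']) (simp_all add: matvec_def Mabcd_def)
  have "a^2 = a'^2" using arg_cong[OF e16, of "\<lambda>v. v!0"] arg_cong[OF e6, of "\<lambda>v. v!0"] cols(1)[of a b c d] cols(1)[of a' b' c' d'] by simp
  moreover have "b^2 = b'^2" using arg_cong[OF e16, of "\<lambda>v. v!4"] arg_cong[OF e6, of "\<lambda>v. v!4"] cols(2)[of a b c d] cols(2)[of a' b' c' d'] by simp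
  moreover have "c^2 = c'^2" using arg_cong[OF e56, of "\<lambda>v. v!0"] arg_cong[OF e6, of "\<lambda>v. v!0"] cols(3)[of a b c d] cols(3)[of a' b' c' d'] by simp
  moreover have "d^2 = d'^2" using arg_cong[OF e56, of "\<lambda>v. v!4"] arg_cong[OF e6, of "\<lambda>v. v!4"] cols(4)[of a b c d] cols(4)[of a' b' c' d'] by simp
  ultimately show "A = B" using A B by (simp add: sq_inj)
qed

lemma stabP: "{A\<in>SL. gm A (Sgam q \<omega> \<gamma>) = Sgam q \<omega> \<gamma>} = StP"
proof (intro Set.set_eqI iffI)
  fix A assume "A \<in> {A\<in>SL. gm A (Sgam q \<omega> \<gamma>) = Sgam q \<omega> \<gamma>}"
  hence A: "A \<in> SL" "gm A (Sgam q \<omega> \<gamma>) = gm (1,0,0,1) (Sgam q \<omega> \<gamma>)"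
    using gm_S[of "(1,0,0,1)"] S_eq by auto
  hence "phi A = phi (1,0,0,1)" using gm_S_iff by blast
  then obtain R where "R \<in> StP" "A = mul2 R (1,0,0,1)" using fiber_bwd[OF I_SL A(1)] by blast
  thus "A \<in> StP" by (simp add: mul_id)
next
  fix R assume R: "R \<in> StP"
  have "mul2 R (1,0,0,1) \<in> SL \<and> phi (mul2 R (1,0,0,1)) = phi (1,0,0,1)" by (rule fiber_fwd[OF I_SL R])
  hence "R \<in> SL" "phi R = phi (1,0,0,1)" by (simp_all add: mul_id)
  moreover hence "gm R (Sgam q \<omega> \<gamma>) = Sgam q \<omega> \<gamma>" using gm_S S_eq by simp
  ultimately show "R \<in> {A\<in>SL. gm A (Sgam q \<omega> \<gamma>) = Sgam q \<omega> \<gamma>}" by simp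
qed

lemma card_stab: "card {g \<in> Ggrp q \<omega>. g (Sgam q \<omega> \<gamma>) = Sgam q \<omega> \<gamma>} = q^2 + 1"
proof -
  have "{g \<in> Ggrp q \<omega>. g (Sgam q \<omega> \<gamma>) = Sgam q \<omega> \<gamma>} = gm ` {A\<in>SL. gm A (Sgam q \<omega> \<gamma>) = Sgam q \<omega> \<gamma>}"
    by (auto simp: Ggrp_eq)
  moreover have "inj_on gm {A\<in>SL. gm A (Sgam q \<omega> \<gamma>) = Sgam q \<omega> \<gamma>}"
    using gm_inj by (rule inj_on_subset) auto
  ultimately show ?thesis by (simp add: card_image stabP card_StP)
qed

lemma card_orbit: "card {g (Sgam q \<omega> \<gamma>) | g. g \<in> Ggrp q \<omega>} = q^2 * (q^2 - 1)"
proof -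
  have "{g (Sgam q \<omega> \<gamma>) | g. g \<in> Ggrp q \<omega>} = (\<lambda>A. gm A (Sgam q \<omega> \<gamma>)) ` SL"
    unfolding Ggrp_eq by blast
  also have "\<dots> = (\<lambda>x. ptof (Vf x)) ` (phi ` SL)" unfolding image_image gm_S ..
  moreover have "inj_on (\<lambda>x. ptof (Vf x)) (phi ` SL)"
  proof (rule inj_onI)
    fix x y assume "ptof (Vf x) = ptof (Vf y)"
    hence "Vf x = Vf y" by (rule ptof_last1) (simp_all add: Vf_5 Vf_len)
    thus "x = y" by (rule Vf_inj)
  qed
  ultimately show ?thesis by (simp add: card_image card_orbitP)
qed

end

theorem mainTheorem11:
  fixes q :: nat and \<omega> \<gamma> :: "'a::{field,finite}"
  assumes "\<exists>p k. prime p \<and> 0 < k \<and> q = p ^ k" and "even q"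
    and "card (UNIV :: 'a set) = q^2"
    and "\<omega> \<notin> subF q" and "\<omega> + \<omega>^q = 1"
    and "irreducible [:\<gamma>, 1, 1:]"
  shows "solid_of_Sigma q (Pi4 q \<inter> perp q \<omega> (Sgam q \<omega> \<gamma>))
    \<and> elliptic_quadric_of q (Pi4 q \<inter> perp q \<omega> (Sgam q \<omega> \<gamma>))
          (Pi4 q \<inter> perp q \<omega> (Sgam q \<omega> \<gamma>) \<inter> Quad q)
    \<and> card {g \<in> Ggrp q \<omega>. g (Sgam q \<omega> \<gamma>) = Sgam q \<omega> \<gamma>} = q^2 + 1
    \<and> card {g (Sgam q \<omega> \<gamma>) | g. g \<in> Ggrp q \<omega>} = q^2 * (q^2 - 1)"
proof -
  obtain p k where pk: "prime p" "0 < k" "q = p ^ k" using assms(1) by blast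
  have "(2::nat) dvd p ^ k" using assms(2) pk by simp
  hence "2 dvd p" using prime_dvd_power[of 2 p k] by simp
  hence "p = 2" using pk(1) by (metis primes_dvd_imp_eq two_is_prime_nat)
  hence q2: "q = 2 ^ k" using pk by simp
  interpret ffq q k \<omega> \<gamma>
    by unfold_locales (use q2 pk(2) assms(3-6) in auto)
  show ?thesis using part12 card_stab card_orbit by blast
qed

end
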